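(* Let $r \in \mathbb{Q}_{>1} \setminus \mathbb{N}$ (so $S_r$ is atomic). Let $x \in S_r \setminus \{0\}$ and let $z = \sum_{i=0}^N \alpha_i r^i \in \mathsf{Z}(x)$, where $N \in \mathbb{N}$ and $\alpha_0, \dots, \alpha_N \in \mathbb{N}_0$. Then: (1) $|z| = \min \mathsf{L}(x)$ if and only if $\alpha_i < \mathsf{n}(r)$ for all $i \in \{0, \dots, N\}$; (2) there is exactly one factorization in $\mathsf{Z}(x)$ of minimum length; (3) $|z| = \max \mathsf{L}(x)$ if and only if $\alpha_i < \mathsf{d}(r)$ for all $i \in \{1, \dots, N\}$; (4) there is exactly one factorization in $\mathsf{Z}(x)$ of maximum length; (5) $|\mathsf{Z}(x)| = 1$ if and only if $|\mathsf{L}(x)| = 1$, and in this case $\alpha_0 < \mathsf{n}(r)$ and $\alpha_i < \mathsf{d}(r)$ for all $i \in \{1, \dots, N\}$.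
   Context: For $q \in \mathbb{Q}_{>0}$, $\mathsf{n}(q)$ and $\mathsf{d}(q)$ denote the unique positive integers with $\gcd(\mathsf{n}(q),\mathsf{d}(q))=1$ and $q = \mathsf{n}(q)/\mathsf{d}(q)$. For $r \in \mathbb{Q}_{>0}$, $S_r$ denotes the additive submonoid of $(\mathbb{Q}_{\ge 0},+)$ generated by $\{r^n : n \in \mathbb{N}_0\}$. $S_r$ is atomic exactly when $r=1$ or $\mathsf{n}(r)>1$; if moreover $r \notin \mathbb{N}$, its atoms are exactly the pairwise distinct elements $r^n$, $n \in \mathbb{N}_0$. A factorization of $x \in S_r$ is a formal finite sum $\sum_i \alpha_i r^i$ with $\alpha_i \in \mathbb{N}_0$ whose value in $\mathbb{Q}$ is $x$; $\mathsf{Z}(x)$ is the set of factorizations of $x$, the length of $z=\sum_i \alpha_i r^i$ is $|z| = \sum_i \alpha_i$, and $\mathsf{L}(x) = \{|z| : z \in \mathsf{Z}(x)\}$. Two formal sums differing only by zero coefficients are identified. (For $r>1$, every $\mathsf{L}(x)$ is finite.) *)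

theory Defs
  imports Complex_Main
begin

definition numr :: "rat \<Rightarrow> nat" where
  "numr q = nat (fst (quotient_of q))"
definition denr :: "rat \<Rightarrow> nat" where
  "denr q = nat (snd (quotient_of q))"

text \<open>A factorization is a finitely supported coefficient function alpha : nat \<Rightarrow> nat,
  representing the formal sum of alpha i * r^i (zero coefficients are thus identified).\<close>
definition fsupp :: "(nat \<Rightarrow> nat) \<Rightarrow> nat set" where
  "fsupp a = {i. a i \<noteq> 0}"

definition fval :: "rat \<Rightarrow> (nat \<Rightarrow> nat) \<Rightarrow> rat" where
  "fval r a = (\<Sum>i\<in>fsupp a. of_nat (a i) * r ^ i)"

definition flen :: "(nat \<Rightarrow> nat) \<Rightarrow> nat" where
  "flen a = (\<Sum>i\<in>fsupp a. a i)"

definition Zr :: "rat \<Rightarrow> rat \<Rightarrow> (nat \<Rightarrow> nat) set" where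
  "Zr r x = {a. finite (fsupp a) \<and> fval r a = x}"

definition Lr :: "rat \<Rightarrow> rat \<Rightarrow> nat set" where
  "Lr r x = flen ` Zr r x"

definition Sr :: "rat \<Rightarrow> rat set" where
  "Sr r = {x. Zr r x \<noteq> {}}"

end

theory Submission
  imports Defs
begin

lemma nd_props:
  assumes "r > 1" "r \<notin> \<nat>"
  shows "r = of_nat (numr r) / of_nat (denr r)" "coprime (numr r) (denr r)"
    "denr r \<ge> 2" "numr r > denr r"
proof -
  obtain p q where qo: "quotient_of r = (p, q)" by (cases "quotient_of r")
  have rq: "r = of_int p / of_int q" using quotient_of_div[OF qo] .
  have q0: "q > 0" using quotient_of_denom_pos[OF qo] .
  have cop: "coprime p q" using quotient_of_coprime[OF qo] .
  have nr: "numr r = nat p" and dr: "denr r = nat q" using qo by (simp_all add: numr_def denr_def)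
  have "of_int p > (of_int q :: rat)" using assms(1) rq q0 by (simp add: field_simps)
  hence pq: "p > q" by simp
  show "r = of_nat (numr r) / of_nat (denr r)" using rq nr dr q0 pq by simp
  show "coprime (numr r) (denr r)" using cop nr dr q0 pq
    by (metis coprime_int_iff less_trans nat_0_le order.strict_implies_order int_nat_eq)
  have "q \<noteq> 1"
  proof
    assume "q = 1"
    hence "r = of_nat (nat p)" using rq q0 pq by simp
    thus False using assms(2) by (metis of_nat_in_Nats)
  qed
  thus "denr r \<ge> 2" using dr q0 by simp
  show "numr r > denr r" using nr dr q0 pq by simp
qed

lemma scaled:
  fixes n d :: nat assumes "d > 0" "k \<le> M"
  shows "(of_nat d :: rat)^M * (of_nat n / of_nat d)^k = of_nat (n^k * d^(M-k))"
proof -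
  have "(of_nat d :: rat)^M = of_nat d ^ k * of_nat d ^ (M-k)"
    using assms(2) by (metis le_add_diff_inverse power_add)
  thus ?thesis using assms(1) by (simp add: power_divide)
qed

lemma scaled_sum:
  fixes n d :: nat and c :: "nat \<Rightarrow> int" assumes "d > 0"
  shows "(of_nat d :: rat)^M * (\<Sum>k<M. of_int (c k) * (of_nat n / of_nat d)^k)
     = of_int (\<Sum>k<M. c k * int (n^k * d^(M-k)))"
proof -
  have "(of_nat d :: rat)^M * (\<Sum>k<M. of_int (c k) * (of_nat n / of_nat d)^k)
     = (\<Sum>k<M. of_int (c k) * ((of_nat d)^M * (of_nat n / of_nat d)^k))"
    by (simp add: sum_distrib_left algebra_simps)
  also have "\<dots> = (\<Sum>k<M. of_int (c k) * of_nat (n^k * d^(M-k)))"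
    using scaled[OF assms] by (intro sum.cong) auto
  finally show ?thesis by simp
qed


lemma U1_core:
  fixes n d :: nat
  assumes cop: "coprime n d" and d0: "d > 0" and n0: "n > 0"
  shows "\<forall>a b. (\<forall>k\<ge>M. a k = 0) \<longrightarrow> (\<forall>k\<ge>M. b k = 0) \<longrightarrow> (\<forall>k. a k < n \<and> b k < n) \<longrightarrow>
    (\<Sum>k<M. of_nat (a k) * (of_nat n / of_nat d)^k :: rat) = (\<Sum>k<M. of_nat (b k) * (of_nat n / of_nat d)^k)
    \<longrightarrow> a = b"
proof (induction M)
  case 0
  then show ?case by auto
next
  case (Suc M)
  show ?case
  proof (intro allI impI)
    fix a b :: "nat \<Rightarrow> nat"
    assume sa: "\<forall>k\<ge>Suc M. a k = 0" and sb: "\<forall>k\<ge>Suc M. b k = 0" and lt: "\<forall>k. a k < n \<and> b k < n"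
      and eq: "(\<Sum>k<Suc M. of_nat (a k) * (of_nat n / of_nat d)^k :: rat) = (\<Sum>k<Suc M. of_nat (b k) * (of_nat n / of_nat d)^k)"
    define r :: rat where "r = of_nat n / of_nat d"
    define A where "A = (\<Sum>k<M. of_nat (a (Suc k)) * r^k)"
    define B where "B = (\<Sum>k<M. of_nat (b (Suc k)) * r^k)"
    have split: "(\<Sum>k<Suc M. of_nat (c k) * r^k) = of_nat (c 0) + r * (\<Sum>k<M. of_nat (c (Suc k)) * r^k)" for c :: "nat \<Rightarrow> nat"
      by (subst sum.lessThan_Suc_shift) (simp add: sum_distrib_left algebra_simps)
    have eq2: "of_nat (a 0) + r * A = of_nat (b 0) + r * B"
      using eq split[of a] split[of b] unfolding A_def B_def r_def by simp
    have IA: "(of_nat d :: rat)^M * A = of_int (\<Sum>k<M. int (a (Suc k)) * int (n^k * d^(M-k)))"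
      unfolding A_def r_def using scaled_sum[OF d0, of M "\<lambda>k. int (a (Suc k))" n] by simp
    have IB: "(of_nat d :: rat)^M * B = of_int (\<Sum>k<M. int (b (Suc k)) * int (n^k * d^(M-k)))"
      unfolding B_def r_def using scaled_sum[OF d0, of M "\<lambda>k. int (b (Suc k))" n] by simp
    define iA where "iA = (\<Sum>k<M. int (a (Suc k)) * int (n^k * d^(M-k)))"
    define iB where "iB = (\<Sum>k<M. int (b (Suc k)) * int (n^k * d^(M-k)))"
    have e1: "(of_nat d :: rat)^(Suc M) * (of_nat (a 0) + r * A) = (of_nat d)^(Suc M) * (of_nat (b 0) + r * B)"
      using eq2 by simp
    have e2: "(of_nat d :: rat)^(Suc M) * (of_nat (c0) + r * C) = of_nat d ^ Suc M * of_nat c0 + of_nat n * ((of_nat d)^M * C)" for c0 C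
      unfolding r_def using d0 by (simp add: field_simps)
    have "(of_nat d :: rat) ^ Suc M * of_nat (a 0) + of_nat n * ((of_nat d)^M * A) = of_nat d ^ Suc M * of_nat (b 0) + of_nat n * ((of_nat d)^M * B)"
      using e1 unfolding e2 .
    hence "(of_nat d :: rat) ^ Suc M * of_nat (a 0) + of_nat n * of_int iA = of_nat d ^ Suc M * of_nat (b 0) + of_nat n * of_int iB"
      unfolding IA IB iA_def iB_def .
    hence "(of_int (int d ^ Suc M * int (a 0) + int n * iA) :: rat) = of_int (int d ^ Suc M * int (b 0) + int n * iB)"
      by simp
    hence "int d ^ Suc M * int (a 0) + int n * iA = int d ^ Suc M * int (b 0) + int n * iB"
      by (simp only: of_int_eq_iff)
    hence "int d ^ Suc M * (int (a 0) - int (b 0)) = int n * (iB - iA)"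
      by (simp add: algebra_simps)
    hence "int n dvd int d ^ Suc M * (int (a 0) - int (b 0))" by simp
    moreover have "coprime (int n) (int d ^ Suc M)" using cop by simp
    ultimately have "int n dvd int (a 0) - int (b 0)" using coprime_dvd_mult_right_iff by blast
    moreover have "\<bar>int (a 0) - int (b 0)\<bar> < int n" using lt[rule_format, of 0] by auto
    ultimately have a0: "a 0 = b 0"
    proof -
      assume h1: "int n dvd int (a 0) - int (b 0)" and h2: "\<bar>int (a 0) - int (b 0)\<bar> < int n"
      show ?thesis
      proof (rule ccontr)
        assume "a 0 \<noteq> b 0"
        hence "int (a 0) - int (b 0) \<noteq> 0" by simp
        from dvd_imp_le_int[OF this h1] h2 show False by simp
      qed
    qed
    have rne: "r \<noteq> 0" unfolding r_def using d0 n0 by simp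
    have "A = B" using eq2 a0 rne by simp
    hence "(\<lambda>k. a (Suc k)) = (\<lambda>k. b (Suc k))"
      using Suc.IH sa sb lt unfolding A_def B_def r_def by auto
    thus "a = b" using a0 by (metis not0_implies_Suc ext)
  qed
qed

lemma U2_core:
  fixes n d :: nat
  assumes cop: "coprime n d" and d0: "d > 0" and n0: "n > 0"
  shows "\<forall>a b. (\<forall>k\<ge>M. a k = 0) \<longrightarrow> (\<forall>k\<ge>M. b k = 0) \<longrightarrow> (\<forall>k\<ge>1. a k < d \<and> b k < d) \<longrightarrow>
    (\<Sum>k<M. of_nat (a k) * (of_nat n / of_nat d)^k :: rat) = (\<Sum>k<M. of_nat (b k) * (of_nat n / of_nat d)^k)
    \<longrightarrow> a = b"
proof (induction M)
  case 0
  then show ?case by auto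
next
  case (Suc M)
  show ?case
  proof (intro allI impI)
    fix a b :: "nat \<Rightarrow> nat"
    assume sa: "\<forall>k\<ge>Suc M. a k = 0" and sb: "\<forall>k\<ge>Suc M. b k = 0" and lt: "\<forall>k\<ge>1. a k < d \<and> b k < d"
      and eq: "(\<Sum>k<Suc M. of_nat (a k) * (of_nat n / of_nat d)^k :: rat) = (\<Sum>k<Suc M. of_nat (b k) * (of_nat n / of_nat d)^k)"
    define r :: rat where "r = of_nat n / of_nat d"
    show "a = b"
    proof (cases "M = 0")
      case True
      have "a 0 = b 0" using eq True by simp
      moreover have "a k = b k" if "k \<noteq> 0" for k using sa sb that True by auto
      ultimately show ?thesis by (metis ext)
    next
      case False
      define A where "A = (\<Sum>k<M. of_nat (a k) * r^k)"
      define B where "B = (\<Sum>k<M. of_nat (b k) * r^k)"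
      have eq2: "A + of_nat (a M) * r^M = B + of_nat (b M) * r^M"
        using eq unfolding A_def B_def r_def by simp
      have IA: "(of_nat d :: rat)^M * A = of_int (\<Sum>k<M. int (a k) * int (n^k * d^(M-k)))"
        unfolding A_def r_def using scaled_sum[OF d0, of M "\<lambda>k. int (a k)" n] by simp
      have IB: "(of_nat d :: rat)^M * B = of_int (\<Sum>k<M. int (b k) * int (n^k * d^(M-k)))"
        unfolding B_def r_def using scaled_sum[OF d0, of M "\<lambda>k. int (b k)" n] by simp
      define iA where "iA = (\<Sum>k<M. int (a k) * int (n^k * d^(M-k)))"
      define iB where "iB = (\<Sum>k<M. int (b k) * int (n^k * d^(M-k)))"
      have rM: "(of_nat d :: rat)^M * r^M = of_nat (n^M)"
        unfolding r_def using scaled[OF d0, of M M n] by simp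
      have e1: "(of_nat d :: rat)^M * (A + of_nat (a M) * r^M) = (of_nat d)^M * (B + of_nat (b M) * r^M)"
        using eq2 by simp
      have e2: "(of_nat d :: rat)^M * (C + of_nat c * r^M) = (of_nat d)^M * C + of_nat c * ((of_nat d)^M * r^M)" for C c
        by (simp add: algebra_simps)
      have "(of_nat d :: rat)^M * A + of_nat (a M) * ((of_nat d)^M * r^M) = (of_nat d)^M * B + of_nat (b M) * ((of_nat d)^M * r^M)"
        using e1 unfolding e2 .
      hence "(of_int iA :: rat) + of_nat (a M) * of_nat (n^M) = of_int iB + of_nat (b M) * of_nat (n^M)"
        unfolding IA IB rM iA_def iB_def .
      hence "(of_int (iA + int (a M) * int n ^ M) :: rat) = of_int (iB + int (b M) * int n ^ M)"
        by simp
      hence "iA + int (a M) * int n ^ M = iB + int (b M) * int n ^ M"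
        by (simp only: of_int_eq_iff)
      hence h: "int n ^ M * (int (a M) - int (b M)) = iB - iA"
        by (simp add: algebra_simps)
      have dA: "int d dvd iA" unfolding iA_def
      proof (intro dvd_sum)
        fix k assume "k \<in> {..<M}"
        hence "M - k = Suc (M - k - 1)" by auto
        hence "d dvd d^(M-k)" by (metis dvd_triv_left power_Suc)
        hence "d dvd n^k * d^(M-k)" by (rule dvd_mult)
        hence "int d dvd int (n^k * d^(M-k))" by (simp only: int_dvd_int_iff)
        thus "int d dvd int (a k) * int (n^k * d^(M-k))" by (rule dvd_mult)
      qed
      have dB: "int d dvd iB" unfolding iB_def
      proof (intro dvd_sum)
        fix k assume "k \<in> {..<M}"
        hence "M - k = Suc (M - k - 1)" by auto
        hence "d dvd d^(M-k)" by (metis dvd_triv_left power_Suc)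
        hence "d dvd n^k * d^(M-k)" by (rule dvd_mult)
        hence "int d dvd int (n^k * d^(M-k))" by (simp only: int_dvd_int_iff)
        thus "int d dvd int (b k) * int (n^k * d^(M-k))" by (rule dvd_mult)
      qed
      have "int d dvd int n ^ M * (int (a M) - int (b M))" using h dA dB by simp
      moreover have "coprime (int d) (int n ^ M)" using cop by (simp add: coprime_commute)
      ultimately have h1: "int d dvd int (a M) - int (b M)" using coprime_dvd_mult_right_iff by blast
      have h2: "\<bar>int (a M) - int (b M)\<bar> < int d" using lt[rule_format, of M] False by auto
      have aM: "a M = b M"
      proof (rule ccontr)
        assume "a M \<noteq> b M"
        hence "int (a M) - int (b M) \<noteq> 0" by simp
        from dvd_imp_le_int[OF this h1] h2 show False by simp
      qed
      have AB: "A = B" using eq2 aM by simp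
      have "a(M := 0) = b(M := 0)"
      proof -
        have "(\<Sum>k<M. of_nat ((a(M:=0)) k) * r^k) = A" unfolding A_def by (intro sum.cong) auto
        moreover have "(\<Sum>k<M. of_nat ((b(M:=0)) k) * r^k) = B" unfolding B_def by (intro sum.cong) auto
        moreover have "\<forall>k\<ge>M. (a(M:=0)) k = 0" "\<forall>k\<ge>M. (b(M:=0)) k = 0" using sa sb by auto
        moreover have "\<forall>k\<ge>1. (a(M:=0)) k < d \<and> (b(M:=0)) k < d" using lt d0 by auto
        ultimately show ?thesis using Suc.IH AB unfolding r_def by presburger
      qed
      show ?thesis
      proof (rule ext)
        fix k show "a k = b k" using fun_cong[OF \<open>a(M := 0) = b(M := 0)\<close>, of k] aM
          by (cases "k = M") auto
      qed
    qed
  qed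
qed

lemma fsupp_bound: "finite (fsupp a) \<Longrightarrow> \<exists>M. \<forall>k\<ge>M. a k = 0"
proof -
  assume "finite (fsupp a)"
  then obtain M where "\<forall>n\<in>fsupp a. n < M" by (auto simp: finite_nat_set_iff_bounded)
  hence "\<forall>k\<ge>M. a k = 0" unfolding fsupp_def using leD by blast
  thus ?thesis ..
qed

lemma fval_sum: "\<forall>k\<ge>M. a k = 0 \<Longrightarrow> fval r a = (\<Sum>k<M. of_nat (a k) * r^k)"
  unfolding fval_def
  by (rule sum.mono_neutral_left) (auto simp: fsupp_def intro: leI)

lemma flen_sum: "\<forall>k\<ge>M. a k = 0 \<Longrightarrow> flen a = (\<Sum>k<M. a k)"
  unfolding flen_def
  by (rule sum.mono_neutral_left) (auto simp: fsupp_def intro: leI)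
lemma move:
  assumes fin: "finite (fsupp a)" and pa: "p \<le> a i" and ij: "i \<noteq> j"
    and pq: "of_nat p * r^i = of_nat q * r^j"
  defines "a' \<equiv> a(i := a i - p, j := a j + q)"
  shows "finite (fsupp a')" "fval r a' = fval r a" "flen a' + p = flen a + q"
proof -
  obtain M0 where M0: "\<forall>k\<ge>M0. a k = 0" using fsupp_bound[OF fin] by blast
  define M where "M = max M0 (Suc (max i j))"
  have Ma: "\<forall>k\<ge>M. a k = 0" using M0 unfolding M_def by auto
  have iM: "i \<in> {..<M}" and jM: "j \<in> {..<M}" unfolding M_def by auto
  have Ma': "\<forall>k\<ge>M. a' k = 0"
  proof (intro allI impI)
    fix k assume kM: "M \<le> k"
    with iM jM have "k \<noteq> i" "k \<noteq> j" by auto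
    thus "a' k = 0" using Ma kM unfolding a'_def by simp
  qed
  have "fsupp a' \<subseteq> {..<M}" unfolding fsupp_def
    using Ma' by (metis (mono_tags, lifting) lessThan_iff mem_Collect_eq not_less subsetI)
  thus "finite (fsupp a')" using finite_subset by blast
  have t: "of_nat (a' k) * r^k = of_nat (a k) * r^k - (if k = i then of_nat p * r^i else 0)
     + (if k = j then of_nat q * r^j else 0)" for k
  proof (cases "k = i")
    case True
    then have "k \<noteq> j" using ij by simp
    then show ?thesis using True pa unfolding a'_def by (simp add: of_nat_diff algebra_simps)
  next
    case False
    then show ?thesis unfolding a'_def by (cases "k = j") (simp_all add: algebra_simps)
  qed
  have "fval r a' = (\<Sum>k<M. of_nat (a' k) * r^k)" by (rule fval_sum[OF Ma'])
  also have "\<dots> = (\<Sum>k<M. of_nat (a k) * r^k) - of_nat p * r^i + of_nat q * r^j"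
    unfolding t using iM jM by (simp add: sum.distrib sum_subtractf)
  also have "\<dots> = fval r a" using pq fval_sum[OF Ma] by simp
  finally show "fval r a' = fval r a" .
  have t2: "a' k + (if k = i then p else 0) = a k + (if k = j then q else 0)" for k
    using pa ij unfolding a'_def by auto
  have "flen a' + p = (\<Sum>k<M. a' k + (if k = i then p else 0))"
    using iM by (simp add: sum.distrib flen_sum[OF Ma'])
  also have "\<dots> = (\<Sum>k<M. a k + (if k = j then q else 0))" unfolding t2 ..
  also have "\<dots> = flen a + q" using jM by (simp add: sum.distrib flen_sum[OF Ma])
  finally show "flen a' + p = flen a + q" .
qed

lemma flen_le:
  assumes "finite (fsupp a)" "r \<ge> 1" shows "of_nat (flen a) \<le> fval r a"
proof -
  obtain M where M: "\<forall>k\<ge>M. a k = 0" using fsupp_bound[OF assms(1)] by blast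
  have "of_nat (flen a) = (\<Sum>k<M. (of_nat (a k) :: rat))" using flen_sum[OF M] by simp
  also have "\<dots> \<le> (\<Sum>k<M. of_nat (a k) * r^k)"
  proof (rule sum_mono)
    fix k
    have "(of_nat (a k) :: rat) * 1 \<le> of_nat (a k) * r^k"
      using assms(2) by (intro mult_left_mono one_le_power) auto
    thus "(of_nat (a k) :: rat) \<le> of_nat (a k) * r^k" by simp
  qed
  finally show ?thesis using fval_sum[OF M] by simp
qed


theorem lemma3p2:
  fixes r x :: rat and N :: nat and \<alpha> :: "nat \<Rightarrow> nat"
  assumes "r > 1" and "r \<notin> \<nat>"
    and "x \<in> Sr r" and "x \<noteq> 0"
    and "\<forall>i>N. \<alpha> i = 0"
    and "\<alpha> \<in> Zr r x"
  shows "(flen \<alpha> = Min (Lr r x) \<longleftrightarrow> (\<forall>i\<le>N. \<alpha> i < numr r))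
    \<and> (\<exists>!\<beta>. \<beta> \<in> Zr r x \<and> flen \<beta> = Min (Lr r x))
    \<and> (flen \<alpha> = Max (Lr r x) \<longleftrightarrow> (\<forall>i\<in>{1..N}. \<alpha> i < denr r))
    \<and> (\<exists>!\<beta>. \<beta> \<in> Zr r x \<and> flen \<beta> = Max (Lr r x))
    \<and> (card (Zr r x) = 1 \<longleftrightarrow> card (Lr r x) = 1)
    \<and> (card (Zr r x) = 1 \<longrightarrow> \<alpha> 0 < numr r \<and> (\<forall>i\<in>{1..N}. \<alpha> i < denr r))"
proof -
  define n where "n = numr r"
  define d where "d = denr r"
  have rnd: "r = of_nat n / of_nat d" and cop: "coprime n d" and d2: "d \<ge> 2" and dn: "d < n"
    using nd_props[OF assms(1,2)] unfolding n_def d_def by auto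
  have d0: "d > 0" and n0: "n > 0" using d2 dn by auto
  have r1: "r \<ge> 1" using assms(1) by simp
  define Z where "Z = Zr r x"
  define L where "L = Lr r x"
  have L_def': "L = flen ` Z" unfolding L_def Z_def Lr_def ..
  have inZ: "a \<in> Z \<longleftrightarrow> finite (fsupp a) \<and> fval r a = x" for a unfolding Z_def Zr_def by simp
  have Lne: "L \<noteq> {}" using assms(3) unfolding L_def' Z_def Sr_def by simp
  have Lfin: "finite L"
  proof (rule finite_subset)
    show "L \<subseteq> {..nat \<lceil>x\<rceil>}"
    proof
      fix k assume "k \<in> L"
      then obtain a where a: "a \<in> Z" "k = flen a" unfolding L_def' by auto
      hence "of_nat k \<le> x" using flen_le[OF _ r1, of a] inZ by simp
      hence "\<lceil>of_nat k :: rat\<rceil> \<le> \<lceil>x\<rceil>" by (rule ceiling_mono)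
      hence "int k \<le> \<lceil>x\<rceil>" by simp
      thus "k \<in> {..nat \<lceil>x\<rceil>}" by simp
    qed
  qed simp
  have minl: "\<forall>k. a k < n" if aZ: "a \<in> Z" and am: "flen a = Min L" for a
  proof (rule ccontr)
    assume "\<not> (\<forall>k. a k < n)"
    then obtain i where ai: "n \<le> a i" by (auto simp: not_less)
    have fin: "finite (fsupp a)" and va: "fval r a = x" using aZ inZ by auto
    have pq: "of_nat n * r^i = of_nat d * r^(Suc i)" using rnd d0 by (simp add: field_simps)
    define a' where "a' = a(i := a i - n, Suc i := a (Suc i) + d)"
    have m: "finite (fsupp a')" "fval r a' = fval r a" "flen a' + n = flen a + d"
      using move[OF fin ai _ pq] unfolding a'_def by auto
    have "a' \<in> Z" using m va inZ by simp
    hence "flen a' \<in> L" unfolding L_def' by simp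
    hence "Min L \<le> flen a'" using Lfin by simp
    thus False using m(3) dn am by simp
  qed
  have maxl: "\<forall>k\<ge>1. a k < d" if aZ: "a \<in> Z" and am: "flen a = Max L" for a
  proof (rule ccontr)
    assume "\<not> (\<forall>k\<ge>1. a k < d)"
    then obtain i where ai: "d \<le> a i" and i1: "i \<ge> 1" by (auto simp: not_less)
    have fin: "finite (fsupp a)" and va: "fval r a = x" using aZ inZ by auto
    have ri: "r^i = r * r^(i-1)" using i1 by (metis Suc_diff_1 less_le_trans zero_less_one power_Suc)
    have pq: "of_nat d * r^i = of_nat n * r^(i-1)" unfolding ri using rnd d0 by (simp add: field_simps)
    have ij: "i \<noteq> i - 1" using i1 by simp
    define a' where "a' = a(i := a i - d, i - 1 := a (i - 1) + n)"
    have m: "finite (fsupp a')" "fval r a' = fval r a" "flen a' + d = flen a + n"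
      using move[OF fin ai ij pq] unfolding a'_def by auto
    have "a' \<in> Z" using m va inZ by simp
    hence "flen a' \<in> L" unfolding L_def' by simp
    hence "flen a' \<le> Max L" using Lfin by simp
    thus False using m(3) dn am by simp
  qed
  have U1: "a = b" if ab: "a \<in> Z" "b \<in> Z" "\<forall>k. a k < n" "\<forall>k. b k < n" for a b
  proof -
    obtain M1 where M1: "\<forall>k\<ge>M1. a k = 0" using fsupp_bound ab(1) inZ by blast
    obtain M2 where M2: "\<forall>k\<ge>M2. b k = 0" using fsupp_bound ab(2) inZ by blast
    define M where "M = max M1 M2"
    have Ma: "\<forall>k\<ge>M. a k = 0" and Mb: "\<forall>k\<ge>M. b k = 0" using M1 M2 unfolding M_def by auto
    have "(\<Sum>k<M. of_nat (a k) * r^k) = (\<Sum>k<M. of_nat (b k) * r^k)"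
      using fval_sum[OF Ma, of r] fval_sum[OF Mb, of r] ab(1,2) inZ by simp
    thus ?thesis using U1_core[OF cop d0 n0, of M] Ma Mb ab(3,4) rnd by blast
  qed
  have U2: "a = b" if ab: "a \<in> Z" "b \<in> Z" "\<forall>k\<ge>1. a k < d" "\<forall>k\<ge>1. b k < d" for a b
  proof -
    obtain M1 where M1: "\<forall>k\<ge>M1. a k = 0" using fsupp_bound ab(1) inZ by blast
    obtain M2 where M2: "\<forall>k\<ge>M2. b k = 0" using fsupp_bound ab(2) inZ by blast
    define M where "M = max M1 M2"
    have Ma: "\<forall>k\<ge>M. a k = 0" and Mb: "\<forall>k\<ge>M. b k = 0" using M1 M2 unfolding M_def by auto
    have "(\<Sum>k<M. of_nat (a k) * r^k) = (\<Sum>k<M. of_nat (b k) * r^k)"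
      using fval_sum[OF Ma, of r] fval_sum[OF Mb, of r] ab(1,2) inZ by simp
    thus ?thesis using U2_core[OF cop d0 n0, of M] Ma Mb ab(3,4) rnd by blast
  qed
  obtain \<beta> where \<beta>: "\<beta> \<in> Z" "flen \<beta> = Min L"
    using Min_in[OF Lfin Lne] unfolding L_def' by auto
  obtain \<gamma> where \<gamma>: "\<gamma> \<in> Z" "flen \<gamma> = Max L"
    using Max_in[OF Lfin Lne] unfolding L_def' by auto
  have \<alpha>Z: "\<alpha> \<in> Z" using assms(6) unfolding Z_def .
  have P1: "flen \<alpha> = Min L \<longleftrightarrow> (\<forall>i\<le>N. \<alpha> i < n)"
  proof
    assume "flen \<alpha> = Min L" thus "\<forall>i\<le>N. \<alpha> i < n" using minl[OF \<alpha>Z] by blast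
  next
    assume h: "\<forall>i\<le>N. \<alpha> i < n"
    have "\<forall>k. \<alpha> k < n"
    proof
      fix k show "\<alpha> k < n" using h assms(5) n0 by (cases "k \<le> N") auto
    qed
    hence "\<alpha> = \<beta>" using U1[OF \<alpha>Z \<beta>(1)] minl[OF \<beta>] by blast
    thus "flen \<alpha> = Min L" using \<beta> by simp
  qed
  have P2: "\<exists>!b. b \<in> Z \<and> flen b = Min L"
    using \<beta> minl U1 by blast
  have P3: "flen \<alpha> = Max L \<longleftrightarrow> (\<forall>i\<in>{1..N}. \<alpha> i < d)"
  proof
    assume "flen \<alpha> = Max L" thus "\<forall>i\<in>{1..N}. \<alpha> i < d" using maxl[OF \<alpha>Z] by auto
  next
    assume h: "\<forall>i\<in>{1..N}. \<alpha> i < d"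
    have "\<forall>k\<ge>1. \<alpha> k < d"
    proof (intro allI impI)
      fix k :: nat assume "k \<ge> 1" thus "\<alpha> k < d" using h assms(5) d0 by (cases "k \<le> N") auto
    qed
    hence "\<alpha> = \<gamma>" using U2[OF \<alpha>Z \<gamma>(1)] maxl[OF \<gamma>] by blast
    thus "flen \<alpha> = Max L" using \<gamma> by simp
  qed
  have P4: "\<exists>!b. b \<in> Z \<and> flen b = Max L"
    using \<gamma> maxl U2 by blast
  have P5: "card Z = 1 \<longleftrightarrow> card L = 1"
  proof
    assume "card Z = 1"
    then obtain z where "Z = {z}" by (rule card_1_singletonE)
    thus "card L = 1" unfolding L_def' by simp
  next
    assume "card L = 1"
    then obtain m where Lm: "L = {m}" by (rule card_1_singletonE)
    have "Z = {\<beta>}"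
    proof
      show "Z \<subseteq> {\<beta>}"
      proof
        fix a assume aZ: "a \<in> Z"
        hence "flen a \<in> L" unfolding L_def' by simp
        hence "flen a = Min L" using Lm by simp
        hence "a = \<beta>" using U1[OF aZ \<beta>(1)] minl[OF aZ] minl[OF \<beta>] by blast
        thus "a \<in> {\<beta>}" by simp
      qed
    qed (use \<beta> in simp)
    thus "card Z = 1" by simp
  qed
  have P6: "card Z = 1 \<longrightarrow> \<alpha> 0 < n \<and> (\<forall>i\<in>{1..N}. \<alpha> i < d)"
  proof
    assume "card Z = 1"
    then obtain z where "Z = {z}" by (rule card_1_singletonE)
    hence "\<alpha> = \<beta>" "\<alpha> = \<gamma>" using \<alpha>Z \<beta>(1) \<gamma>(1) by auto
    thus "\<alpha> 0 < n \<and> (\<forall>i\<in>{1..N}. \<alpha> i < d)" using minl[OF \<beta>] maxl[OF \<gamma>] by auto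
  qed
  show ?thesis unfolding Z_def[symmetric] L_def[symmetric] n_def[symmetric] d_def[symmetric]
    using P1 P2 P3 P4 P5 P6 by (intro conjI) assumption+
qed

end
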